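(* Assume the instance is non-degenerate and let $x\in S\cap\mathbb{R}^n$ be such that the (underlying undirected graph of the) tangent digraph $\mathcal{G}(x)$ is a spanning tree. If $x$ is not a local optimum, then there exists $e\in E^\circ(x)$ such that $V(\mathcal{T}(e,x))$ is a feasible descent direction at $x$.
   Context: $\mathbb{R}_{\max}=\mathbb{R}\cup\{-\infty\}$, $\chi_J$ the indicator vector of $J$. Data: $A^\pm=(a^\pm_{i,j})\in\mathbb{R}_{\max}^{m\times n}$, $C=(c_{k,j})\in\mathbb{R}_{\max}^{p\times n}$, $\mu^+\in\mathbb{Z}_{\ge0}^p$, $\mu^-\in\mathbb{Z}_{\ge0}^n$; $A=(a_{i,j})$, $a_{i,j}=\max(a^+_{i,j},a^-_{i,j})$. $f(x)=\sum_k\mu^+_k\max_j(c_{k,j}+x_j)-\sum_j\mu^-_jx_j$; $S=\{x:\max_j(a^+_{i,j}+x_j)\ge\max_j(a^-_{i,j}+x_j)\ \forall i\}$. Standing assumptions: each row of $A$ and $C$ has a finite entry; $\sum_k\mu^+_k=\sum_j\mu^-_j$; the undirected graph on $\{u_k\}\cup[n]\cup\{w_i\}$ with edges $\{u_k,j\}$ ($c_{k,j}\ne-\infty$), $\{w_i,j\}$ ($a_{i,j}\ne-\infty$) is connected. Non-degenerate: no square submatrix of $Q$ ($C$ stacked above $A$) with finite tropical determinant $\max_\sigma\sum_iq_{i,\sigma(i)}$ has two permutations attaining that maximum. $x\in S\cap\mathbb{R}^n$ is a local optimum if there is $\delta>0$ with $f(y)\ge f(x)$ for all $y\in S\cap\mathbb{R}^n$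 with $\max_j|x_j-y_j|<\delta$. $\epsilon(x)$ is the smallest positive value among $|(a_{i,j_1}+x_{j_1})-(a_{i,j_2}+x_{j_2})|$ and $|(c_{k,j_1}+x_{j_1})-(c_{k,j_2}+x_{j_2})|$; $J\subset[n]$ is a feasible descent direction at $x$ if $x+\delta\chi_J\in S$ and $f(x+\delta\chi_J)<f(x)$ for all $0<\delta<\epsilon(x)$. Tangent digraph $\mathcal{G}(x)$: vertices $U=\{u_1..u_p\}$, $V=[n]$, $W=\{w_1..w_m\}$; $E_1(x)=\{(u_k,j):\max_{j'}(c_{k,j'}+x_{j'})=c_{k,j}+x_j\}$, $E_2(x)=\{(w_i,j):\max_{j'}(a_{i,j'}+x_{j'})=a^-_{i,j}+x_j\}$, $E_3(x)=\{(j,w_i):\max_{j'}(a_{i,j'}+x_{j'})=a^+_{i,j}+x_j\}$. $\mathcal{N}^-_V(w_i,x)=\{j:(j,w_i)\in E_3(x)\}$; $E^\circ(x)=E_1(x)\cup E_2(x)\cup\{(j,w_i)\in E_3(x):|\mathcal{N}^-_V(w_i,x)|\ge2\}$. For an edge $e$, removing $e$ from the tree $\mathcal{G}(x)$ leaves two trees, and $\mathcal{T}(e,x)$ is the one containing the endpoint of $e$ in $U\cup W$; $V(\mathcal{T}(e,x))$ is its vertex set in $V$. *)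

theory Defs
  imports Complex_Main "HOL-Library.Extended_Real"
begin

text \<open>Indices: rows of C are 0..<p, columns 0..<n, rows of A are 0..<m.
  Entries of R_max are ereal values different from \<infinity> (assumed in the theorem).\<close>

datatype tvert = U nat | V nat | W nat

definition amat :: "(nat \<Rightarrow> nat \<Rightarrow> ereal) \<Rightarrow> (nat \<Rightarrow> nat \<Rightarrow> ereal) \<Rightarrow> nat \<Rightarrow> nat \<Rightarrow> ereal" where
  "amat Ap Am i j = max (Ap i j) (Am i j)"

definition rmax :: "nat \<Rightarrow> (nat \<Rightarrow> nat \<Rightarrow> ereal) \<Rightarrow> nat \<Rightarrow> (nat \<Rightarrow> real) \<Rightarrow> ereal" where
  "rmax n M i x = Max ((\<lambda>j. M i j + ereal (x j)) ` {..<n})"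

definition objf :: "nat \<Rightarrow> nat \<Rightarrow> (nat \<Rightarrow> nat \<Rightarrow> ereal) \<Rightarrow> (nat \<Rightarrow> nat) \<Rightarrow> (nat \<Rightarrow> nat)
    \<Rightarrow> (nat \<Rightarrow> real) \<Rightarrow> real" where
  "objf n p C mup mum x =
     (\<Sum>k<p. real (mup k) * real_of_ereal (rmax n C k x)) - (\<Sum>j<n. real (mum j) * x j)"

definition feasS :: "nat \<Rightarrow> nat \<Rightarrow> (nat \<Rightarrow> nat \<Rightarrow> ereal) \<Rightarrow> (nat \<Rightarrow> nat \<Rightarrow> ereal)
    \<Rightarrow> (nat \<Rightarrow> real) \<Rightarrow> bool" where
  "feasS m n Ap Am x \<longleftrightarrow> (\<forall>i<m. rmax n Ap i x \<ge> rmax n Am i x)"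

definition local_opt :: "nat \<Rightarrow> nat \<Rightarrow> nat \<Rightarrow> (nat \<Rightarrow> nat \<Rightarrow> ereal) \<Rightarrow> (nat \<Rightarrow> nat \<Rightarrow> ereal)
    \<Rightarrow> (nat \<Rightarrow> nat \<Rightarrow> ereal) \<Rightarrow> (nat \<Rightarrow> nat) \<Rightarrow> (nat \<Rightarrow> nat) \<Rightarrow> (nat \<Rightarrow> real) \<Rightarrow> bool" where
  "local_opt m n p Ap Am C mup mum x \<longleftrightarrow> feasS m n Ap Am x \<and>
     (\<exists>\<delta>>0. \<forall>y. feasS m n Ap Am y \<and> (\<forall>j<n. \<bar>x j - y j\<bar> < \<delta>)
        \<longrightarrow> objf n p C mup mum y \<ge> objf n p C mup mum x)"

text \<open>The values whose smallest positive element is epsilon(x).\<close>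
definition gaps :: "nat \<Rightarrow> nat \<Rightarrow> nat \<Rightarrow> (nat \<Rightarrow> nat \<Rightarrow> ereal) \<Rightarrow> (nat \<Rightarrow> nat \<Rightarrow> ereal)
    \<Rightarrow> (nat \<Rightarrow> nat \<Rightarrow> ereal) \<Rightarrow> (nat \<Rightarrow> real) \<Rightarrow> real set" where
  "gaps m n p Ap Am C x =
     {\<bar>(real_of_ereal (amat Ap Am i j1) + x j1) - (real_of_ereal (amat Ap Am i j2) + x j2)\<bar> | i j1 j2.
        i < m \<and> j1 < n \<and> j2 < n \<and> amat Ap Am i j1 \<noteq> -\<infinity> \<and> amat Ap Am i j2 \<noteq> -\<infinity>}
   \<union> {\<bar>(real_of_ereal (C k j1) + x j1) - (real_of_ereal (C k j2) + x j2)\<bar> | k j1 j2.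
        k < p \<and> j1 < n \<and> j2 < n \<and> C k j1 \<noteq> -\<infinity> \<and> C k j2 \<noteq> -\<infinity>}"

definition shiftv :: "(nat \<Rightarrow> real) \<Rightarrow> real \<Rightarrow> nat set \<Rightarrow> nat \<Rightarrow> real" where
  "shiftv x \<delta> J = (\<lambda>j. x j + (if j \<in> J then \<delta> else 0))"

text \<open>0 < delta < epsilon(x) is rendered as: delta below every positive gap
  (epsilon(x) = +infinity if there is no positive gap).\<close>
definition descent_dir :: "nat \<Rightarrow> nat \<Rightarrow> nat \<Rightarrow> (nat \<Rightarrow> nat \<Rightarrow> ereal) \<Rightarrow> (nat \<Rightarrow> nat \<Rightarrow> ereal)
    \<Rightarrow> (nat \<Rightarrow> nat \<Rightarrow> ereal) \<Rightarrow> (nat \<Rightarrow> nat) \<Rightarrow> (nat \<Rightarrow> nat) \<Rightarrow> nat set \<Rightarrow> (nat \<Rightarrow> real) \<Rightarrow> bool" where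
  "descent_dir m n p Ap Am C mup mum J x \<longleftrightarrow> J \<subseteq> {..<n} \<and>
     (\<forall>\<delta>. 0 < \<delta> \<and> (\<forall>g\<in>gaps m n p Ap Am C x. 0 < g \<longrightarrow> \<delta> < g) \<longrightarrow>
        feasS m n Ap Am (shiftv x \<delta> J) \<and>
        objf n p C mup mum (shiftv x \<delta> J) < objf n p C mup mum x)"

definition tverts :: "nat \<Rightarrow> nat \<Rightarrow> nat \<Rightarrow> tvert set" where
  "tverts m n p = U ` {..<p} \<union> V ` {..<n} \<union> W ` {..<m}"

definition E1 :: "nat \<Rightarrow> nat \<Rightarrow> (nat \<Rightarrow> nat \<Rightarrow> ereal) \<Rightarrow> (nat \<Rightarrow> real) \<Rightarrow> (tvert \<times> tvert) set" where
  "E1 n p C x = {(U k, V j) | k j. k < p \<and> j < n \<and> rmax n C k x = C k j + ereal (x j)}"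

definition E2 :: "nat \<Rightarrow> nat \<Rightarrow> (nat \<Rightarrow> nat \<Rightarrow> ereal) \<Rightarrow> (nat \<Rightarrow> nat \<Rightarrow> ereal) \<Rightarrow> (nat \<Rightarrow> real) \<Rightarrow> (tvert \<times> tvert) set" where
  "E2 m n Ap Am x = {(W i, V j) | i j. i < m \<and> j < n \<and> rmax n (amat Ap Am) i x = Am i j + ereal (x j)}"

definition E3 :: "nat \<Rightarrow> nat \<Rightarrow> (nat \<Rightarrow> nat \<Rightarrow> ereal) \<Rightarrow> (nat \<Rightarrow> nat \<Rightarrow> ereal) \<Rightarrow> (nat \<Rightarrow> real) \<Rightarrow> (tvert \<times> tvert) set" where
  "E3 m n Ap Am x = {(V j, W i) | i j. i < m \<and> j < n \<and> rmax n (amat Ap Am) i x = Ap i j + ereal (x j)}"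

definition tedges :: "nat \<Rightarrow> nat \<Rightarrow> nat \<Rightarrow> (nat \<Rightarrow> nat \<Rightarrow> ereal) \<Rightarrow> (nat \<Rightarrow> nat \<Rightarrow> ereal)
    \<Rightarrow> (nat \<Rightarrow> nat \<Rightarrow> ereal) \<Rightarrow> (nat \<Rightarrow> real) \<Rightarrow> (tvert \<times> tvert) set" where
  "tedges m n p Ap Am C x = E1 n p C x \<union> E2 m n Ap Am x \<union> E3 m n Ap Am x"

definition Ecirc :: "nat \<Rightarrow> nat \<Rightarrow> nat \<Rightarrow> (nat \<Rightarrow> nat \<Rightarrow> ereal) \<Rightarrow> (nat \<Rightarrow> nat \<Rightarrow> ereal)
    \<Rightarrow> (nat \<Rightarrow> nat \<Rightarrow> ereal) \<Rightarrow> (nat \<Rightarrow> real) \<Rightarrow> (tvert \<times> tvert) set" where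
  "Ecirc m n p Ap Am C x = E1 n p C x \<union> E2 m n Ap Am x \<union>
     {e \<in> E3 m n Ap Am x. card {j. (V j, snd e) \<in> E3 m n Ap Am x} \<ge> 2}"

definition uconn :: "(tvert \<times> tvert) set \<Rightarrow> (tvert \<times> tvert) set" where
  "uconn E = (E \<union> E\<inverse>)\<^sup>*"

definition connected_on :: "tvert set \<Rightarrow> (tvert \<times> tvert) set \<Rightarrow> bool" where
  "connected_on Vs E \<longleftrightarrow> (\<forall>a\<in>Vs. \<forall>b\<in>Vs. (a, b) \<in> uconn E)"

text \<open>The underlying undirected multigraph (V, E) is a spanning tree of Vs:
  connected on Vs, and acyclic (no edge lies on a cycle, i.e. every edge is a bridge).\<close>
definition spanning_tree :: "tvert set \<Rightarrow> (tvert \<times> tvert) set \<Rightarrow> bool" where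
  "spanning_tree Vs E \<longleftrightarrow> E \<subseteq> Vs \<times> Vs \<and> connected_on Vs E \<and>
     (\<forall>e\<in>E. (fst e, snd e) \<notin> uconn (E - {e}))"

definition uw_end :: "tvert \<times> tvert \<Rightarrow> tvert" where
  "uw_end e = (case fst e of V _ \<Rightarrow> snd e | _ \<Rightarrow> fst e)"

text \<open>V(T(e,x)): column vertices of the component of the U/W-endpoint of e after removing e.\<close>
definition subtreeV :: "nat \<Rightarrow> (tvert \<times> tvert) set \<Rightarrow> tvert \<times> tvert \<Rightarrow> nat set" where
  "subtreeV n E e = {j. j < n \<and> (uw_end e, V j) \<in> uconn (E - {e})}"

text \<open>Undirected bipartite support graph of the data (standing assumption: connected).\<close>
definition supp_edges :: "nat \<Rightarrow> nat \<Rightarrow> nat \<Rightarrow> (nat \<Rightarrow> nat \<Rightarrow> ereal) \<Rightarrow> (nat \<Rightarrow> nat \<Rightarrow> ereal)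
    \<Rightarrow> (nat \<Rightarrow> nat \<Rightarrow> ereal) \<Rightarrow> (tvert \<times> tvert) set" where
  "supp_edges m n p Ap Am C =
     {(U k, V j) | k j. k < p \<and> j < n \<and> C k j \<noteq> -\<infinity>} \<union>
     {(W i, V j) | i j. i < m \<and> j < n \<and> amat Ap Am i j \<noteq> -\<infinity>}"

text \<open>Q = C stacked above A: rows 0..<p are C, rows p..<p+m are A.\<close>
definition qmat :: "nat \<Rightarrow> (nat \<Rightarrow> nat \<Rightarrow> ereal) \<Rightarrow> (nat \<Rightarrow> nat \<Rightarrow> ereal)
    \<Rightarrow> (nat \<Rightarrow> nat \<Rightarrow> ereal) \<Rightarrow> nat \<Rightarrow> nat \<Rightarrow> ereal" where
  "qmat p Ap Am C r j = (if r < p then C r j else amat Ap Am (r - p) j)"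

text \<open>Non-degeneracy: for every square submatrix (rows I, columns J) with finite tropical
  determinant, the optimal bijection I \<rightarrow> J is unique.\<close>
definition nondegenerate :: "nat \<Rightarrow> nat \<Rightarrow> nat \<Rightarrow> (nat \<Rightarrow> nat \<Rightarrow> ereal) \<Rightarrow> (nat \<Rightarrow> nat \<Rightarrow> ereal)
    \<Rightarrow> (nat \<Rightarrow> nat \<Rightarrow> ereal) \<Rightarrow> bool" where
  "nondegenerate m n p Ap Am C \<longleftrightarrow>
     (\<forall>I J \<sigma>1 \<sigma>2. I \<subseteq> {..<p + m} \<and> J \<subseteq> {..<n} \<and> bij_betw \<sigma>1 I J \<and> bij_betw \<sigma>2 I J \<and>
        (\<Sum>i\<in>I. qmat p Ap Am C i (\<sigma>1 i)) \<noteq> -\<infinity> \<and>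
        (\<forall>\<tau>. bij_betw \<tau> I J \<longrightarrow> (\<Sum>i\<in>I. qmat p Ap Am C i (\<tau> i)) \<le> (\<Sum>i\<in>I. qmat p Ap Am C i (\<sigma>1 i))) \<and>
        (\<Sum>i\<in>I. qmat p Ap Am C i (\<sigma>2 i)) = (\<Sum>i\<in>I. qmat p Ap Am C i (\<sigma>1 i))
      \<longrightarrow> (\<forall>i\<in>I. \<sigma>1 i = \<sigma>2 i))"

end

theory Submission
  imports Defs
begin

definition oth :: "tvert \<times> tvert \<Rightarrow> tvert" where
  "oth e = (if uw_end e = fst e then snd e else fst e)"

definition side :: "(tvert \<times> tvert) set \<Rightarrow> tvert \<times> tvert \<Rightarrow> tvert set" where
  "side E e = {v. (uw_end e, v) \<in> uconn (E - {e})}"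

lemma uw_end_cases: "uw_end e = fst e \<or> uw_end e = snd e"
  by (auto simp: uw_end_def split: tvert.splits)

lemma uconn_sym: "(a, b) \<in> uconn E \<Longrightarrow> (b, a) \<in> uconn E"
proof -
  assume a: "(a, b) \<in> uconn E"
  have "sym (E \<union> E\<inverse>)" by (auto simp: sym_def)
  hence "sym ((E \<union> E\<inverse>)\<^sup>*)" by (rule sym_rtrancl)
  thus ?thesis using a unfolding uconn_def by (auto dest: symD)
qed

lemma uconn_trans: "(a, b) \<in> uconn E \<Longrightarrow> (b, c) \<in> uconn E \<Longrightarrow> (a, c) \<in> uconn E"
  unfolding uconn_def by (rule rtrancl_trans)

lemma uconn_edge: "e \<in> E \<Longrightarrow> (fst e, snd e) \<in> uconn E"
  unfolding uconn_def by (cases e) auto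

lemma uconn_edge': "e \<in> E \<Longrightarrow> (snd e, fst e) \<in> uconn E"
  by (rule uconn_sym[OF uconn_edge])

lemma same_side:
  assumes "e0 \<in> E" "e0 \<noteq> e"
  shows "fst e0 \<in> side E e \<longleftrightarrow> snd e0 \<in> side E e"
proof -
  have "e0 \<in> E - {e}" using assms by auto
  hence 1: "(fst e0, snd e0) \<in> uconn (E - {e})" "(snd e0, fst e0) \<in> uconn (E - {e})"
    using uconn_edge[OF \<open>e0 \<in> E - {e}\<close>] uconn_edge'[OF \<open>e0 \<in> E - {e}\<close>] by auto
  show ?thesis unfolding side_def
    using uconn_trans[OF _ 1(1), of "uw_end e"] uconn_trans[OF _ 1(2), of "uw_end e"] by auto
qed

lemma same_side_uw:
  assumes "e0 \<in> E" "e0 \<noteq> e"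
  shows "uw_end e0 \<in> side E e \<longleftrightarrow> oth e0 \<in> side E e"
  using same_side[OF assms] uw_end_cases[of e0] by (auto simp: oth_def)

lemma uw_in_side: "uw_end e \<in> side E e"
  unfolding side_def uconn_def by simp

lemma oth_notin_side:
  assumes "spanning_tree Vs E" "e \<in> E"
  shows "oth e \<notin> side E e"
proof
  assume a: "oth e \<in> side E e"
  have nb: "(fst e, snd e) \<notin> uconn (E - {e})" using assms by (auto simp: spanning_tree_def)
  show False
  proof (cases "uw_end e = fst e")
    case True
    then show False using a nb by (auto simp: side_def oth_def)
  next
    case False
    hence "uw_end e = snd e" using uw_end_cases by blast
    hence "(snd e, fst e) \<in> uconn (E - {e})" using a False by (simp add: side_def oth_def)
    from uconn_sym[OF this] nb show False by simp
  qed
qed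

lemma F_edge:
  fixes lam :: "tvert \<times> tvert \<Rightarrow> real"
  assumes "finite E" "spanning_tree Vs E" "e0 \<in> E"
  shows "(\<Sum>e\<in>E. lam e * (if uw_end e0 \<in> side E e then 1 else 0))
       - (\<Sum>e\<in>E. lam e * (if oth e0 \<in> side E e then 1 else 0)) = lam e0"
proof -
  have "(\<Sum>e\<in>E. lam e * (if uw_end e0 \<in> side E e then 1 else 0))
       - (\<Sum>e\<in>E. lam e * (if oth e0 \<in> side E e then 1 else 0))
     = (\<Sum>e\<in>E. lam e * ((if uw_end e0 \<in> side E e then 1 else 0) - (if oth e0 \<in> side E e then 1 else 0)))"
    by (simp add: sum_subtractf algebra_simps)
  also have "\<dots> = (\<Sum>e\<in>E. if e = e0 then lam e else 0)"
  proof (rule sum.cong)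
    fix e assume "e \<in> E"
    show "lam e * ((if uw_end e0 \<in> side E e then 1 else 0) - (if oth e0 \<in> side E e then 1 else 0)) =
         (if e = e0 then lam e else 0)"
    proof (cases "e = e0")
      case True
      then show ?thesis using uw_in_side[of e0 E] oth_notin_side[OF assms(2,3)] by simp
    next
      case False
      then show ?thesis using same_side_uw[OF assms(3), of e] by auto
    qed
  qed simp
  also have "\<dots> = lam e0" using assms by simp
  finally show ?thesis .
qed

lemma const_on_uconn:
  assumes "\<forall>e\<in>E. G (fst e) = G (snd e)" "(a, b) \<in> uconn E"
  shows "G a = (G b :: real)"
  using assms(2) unfolding uconn_def
proof (induction rule: rtrancl_induct)
  case base
  then show ?case by simp
next
  case (step y z)
  then show ?case using assms(1) by force
qed


lemma rmax_fin:
  fixes r :: "nat \<Rightarrow> ereal" and x :: "nat \<Rightarrow> real"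
  assumes "0 < n" "\<forall>j<n. r j \<noteq> \<infinity>" "\<exists>j<n. r j \<noteq> -\<infinity>"
  shows "\<exists>Mr. Max ((\<lambda>j. r j + ereal (x j)) ` {..<n}) = ereal Mr"
proof -
  let ?S = "(\<lambda>j. r j + ereal (x j)) ` {..<n}"
  have fS: "finite ?S" "?S \<noteq> {}" using assms by auto
  obtain j0 where j0: "j0 < n" "r j0 \<noteq> -\<infinity>" using assms by auto
  have "r j0 + ereal (x j0) \<le> Max ?S" using fS j0 by (intro Max_ge) auto
  moreover have "r j0 + ereal (x j0) \<noteq> -\<infinity>" using j0 by simp
  ultimately have a: "Max ?S \<noteq> -\<infinity>" by auto
  have "Max ?S \<in> ?S" using fS by (rule Max_in)
  then obtain j where "j < n" "Max ?S = r j + ereal (x j)" by auto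
  hence b: "Max ?S \<noteq> \<infinity>" using assms(2) by auto
  show ?thesis using a b by (cases "Max ?S") auto
qed

lemma row_shift:
  fixes r :: "nat \<Rightarrow> ereal" and x d :: "nat \<Rightarrow> real"
  assumes n0: "0 < n" and fin: "\<forall>j<n. r j \<noteq> \<infinity>"
   and M: "Max ((\<lambda>j. r j + ereal (x j)) ` {..<n}) = ereal Mr"
   and small: "\<forall>j<n. \<forall>j0<n. r j0 + ereal (x j0) = ereal Mr \<and> r j \<noteq> -\<infinity> \<and> r j + ereal (x j) \<noteq> ereal Mr
       \<longrightarrow> d j - d j0 < Mr - (real_of_ereal (r j) + x j)"
  shows "Max ((\<lambda>j. r j + ereal (x j + d j)) ` {..<n})
       = ereal (Mr + Max (d ` {j. j<n \<and> r j + ereal (x j) = ereal Mr}))"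
proof -
  let ?S = "(\<lambda>j. r j + ereal (x j)) ` {..<n}"
  let ?N = "{j. j<n \<and> r j + ereal (x j) = ereal Mr}"
  have fS: "finite ?S" "?S \<noteq> {}" using n0 by auto
  have "Max ?S \<in> ?S" using fS by (rule Max_in)
  then obtain j1 where j1: "j1 < n" "r j1 + ereal (x j1) = ereal Mr" using M by auto
  have fN: "finite ?N" "?N \<noteq> {}" using j1 by auto
  define ph where "ph = Max (d ` ?N)"
  have "ph \<in> d ` ?N" unfolding ph_def using fN by (intro Max_in) auto
  then obtain j2 where j2: "j2 < n" "r j2 + ereal (x j2) = ereal Mr" "d j2 = ph" by auto
  have leph: "d j \<le> ph" if "j \<in> ?N" for j unfolding ph_def using fN that by (intro Max_ge) auto
  have le: "r j + ereal (x j + d j) \<le> ereal (Mr + ph)" if j: "j < n" for j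
  proof (cases "r j")
    case (real a)
    have "r j + ereal (x j) \<le> Max ?S" using fS j by (intro Max_ge) auto
    hence ale: "a + x j \<le> Mr" using M real by simp
    show ?thesis
    proof (cases "a + x j = Mr")
      case True
      hence "j \<in> ?N" using j real by simp
      hence "d j \<le> ph" by (rule leph)
      thus ?thesis using True real by simp
    next
      case False
      have "d j - d j2 < Mr - (real_of_ereal (r j) + x j)"
        using small j j2 real False by auto
      thus ?thesis using real j2 by simp
    qed
  next
    case PInf
    then show ?thesis using fin j by auto
  next
    case MInf
    then show ?thesis by simp
  qed
  show ?thesis
  proof (rule antisym)
    show "Max ((\<lambda>j. r j + ereal (x j + d j)) ` {..<n}) \<le> ereal (Mr + Max (d ` ?N))"
      using le n0 unfolding ph_def[symmetric] by (subst Max_le_iff) auto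
    have "r j2 + ereal (x j2 + d j2) = ereal (Mr + ph)"
      using j2 by (cases "r j2") auto
    moreover have "r j2 + ereal (x j2 + d j2) \<le> Max ((\<lambda>j. r j + ereal (x j + d j)) ` {..<n})"
      using j2 by (intro Max_ge) auto
    ultimately show "ereal (Mr + Max (d ` ?N)) \<le> Max ((\<lambda>j. r j + ereal (x j + d j)) ` {..<n})"
      unfolding ph_def by simp
  qed
qed


locale ts =
  fixes m n p :: nat
    and Ap Am C :: "nat \<Rightarrow> nat \<Rightarrow> ereal"
    and mup mum :: "nat \<Rightarrow> nat"
    and x :: "nat \<Rightarrow> real"
  assumes noinfA: "\<forall>i<m. \<forall>j<n. Ap i j \<noteq> \<infinity> \<and> Am i j \<noteq> \<infinity>"
    and noinfC: "\<forall>k<p. \<forall>j<n. C k j \<noteq> \<infinity>"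
    and rowA: "\<forall>i<m. \<exists>j<n. amat Ap Am i j \<noteq> -\<infinity>"
    and rowC: "\<forall>k<p. \<exists>j<n. C k j \<noteq> -\<infinity>"
    and balance: "(\<Sum>k<p. mup k) = (\<Sum>j<n. mum j)"
    and feas: "feasS m n Ap Am x"
    and tree: "spanning_tree (tverts m n p) (tedges m n p Ap Am C x)"
    and npos: "0 < n"
begin

abbreviation "E \<equiv> tedges m n p Ap Am C x"

definition nb :: "tvert \<Rightarrow> nat set" where
  "nb z = {j. (z, V j) \<in> E \<or> (V j, z) \<in> E}"

definition phi :: "(nat \<Rightarrow> real) \<Rightarrow> tvert \<Rightarrow> real" where
  "phi d z = Max (d ` nb z)"

definition pot :: "(nat \<Rightarrow> real) \<Rightarrow> tvert \<Rightarrow> real" where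
  "pot d v = (case v of V j \<Rightarrow> d j | _ \<Rightarrow> phi d v)"

definition lam :: "(nat \<Rightarrow> real) \<Rightarrow> tvert \<times> tvert \<Rightarrow> real" where
  "lam d e = pot d (uw_end e) - pot d (oth e)"

definition gl :: "(nat \<Rightarrow> real) \<Rightarrow> real" where
  "gl d = (\<Sum>k<p. real (mup k) * phi d (U k)) - (\<Sum>j<n. real (mum j) * d j)"

definition ind :: "nat set \<Rightarrow> nat \<Rightarrow> real" where
  "ind T = (\<lambda>j. if j \<in> T then 1 else 0)"

definition Tset :: "tvert \<times> tvert \<Rightarrow> nat set" where
  "Tset e = subtreeV n E e"

lemma Tset_eq: "Tset e = {j. j < n \<and> V j \<in> side E e}"
  by (simp add: Tset_def subtreeV_def side_def)

lemma E_sub: "E \<subseteq> tverts m n p \<times> tverts m n p"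
  using tree by (simp add: spanning_tree_def)

lemma finE: "finite E"
proof -
  have "finite (tverts m n p)" by (simp add: tverts_def)
  thus ?thesis using E_sub finite_subset by blast
qed

lemma memE: "e \<in> E \<longleftrightarrow>
   (\<exists>k j. e = (U k, V j) \<and> k < p \<and> j < n \<and> rmax n C k x = C k j + ereal (x j)) \<or>
   (\<exists>i j. e = (W i, V j) \<and> i < m \<and> j < n \<and> rmax n (amat Ap Am) i x = Am i j + ereal (x j)) \<or>
   (\<exists>i j. e = (V j, W i) \<and> i < m \<and> j < n \<and> rmax n (amat Ap Am) i x = Ap i j + ereal (x j))"
  by (auto simp: tedges_def E1_def E2_def E3_def)

lemma E_U: "(U k, V j) \<in> E \<longleftrightarrow> k < p \<and> j < n \<and> rmax n C k x = C k j + ereal (x j)"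
  by (simp add: tedges_def E1_def E2_def E3_def)

lemma E_W1: "(W i, V j) \<in> E \<longleftrightarrow> i < m \<and> j < n \<and> rmax n (amat Ap Am) i x = Am i j + ereal (x j)"
  by (simp add: tedges_def E1_def E2_def E3_def)

lemma E_W2: "(V j, W i) \<in> E \<longleftrightarrow> i < m \<and> j < n \<and> rmax n (amat Ap Am) i x = Ap i j + ereal (x j)"
  by (simp add: tedges_def E1_def E2_def E3_def)

lemma E_elim:
  assumes "e \<in> E"
  obtains (EU) k j where "e = (U k, V j)" "k < p" "j < n" "rmax n C k x = C k j + ereal (x j)"
  | (EW1) i j where "e = (W i, V j)" "i < m" "j < n" "rmax n (amat Ap Am) i x = Am i j + ereal (x j)"
  | (EW2) i j where "e = (V j, W i)" "i < m" "j < n" "rmax n (amat Ap Am) i x = Ap i j + ereal (x j)"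
  using assms unfolding memE by blast

lemma nb_sub: "nb z \<subseteq> {..<n}"
proof
  fix j assume "j \<in> nb z"
  hence "(z, V j) \<in> E \<or> (V j, z) \<in> E" by (simp add: nb_def)
  thus "j \<in> {..<n}"
  proof
    assume "(z, V j) \<in> E" thus ?thesis by (cases rule: E_elim) auto
  next
    assume "(V j, z) \<in> E" thus ?thesis by (cases rule: E_elim) auto
  qed
qed

lemma nb_fin: "finite (nb z)"
  using nb_sub finite_subset by blast

lemma nbU': "j \<in> nb (U k) \<longleftrightarrow> (U k, V j) \<in> E"
proof -
  have "(V j, U k) \<notin> E" by (simp add: tedges_def E1_def E2_def E3_def)
  thus ?thesis by (simp add: nb_def)
qed

lemma nbU: "nb (U k) = {j. k < p \<and> j < n \<and> rmax n C k x = C k j + ereal (x j)}"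
  using nbU' E_U by blast

lemma rmax_ge: "j < n \<Longrightarrow> M i j + ereal (y j) \<le> rmax n M i y"
  unfolding rmax_def by (intro Max_ge) auto

lemma rmax_in: "\<exists>j<n. rmax n M i y = M i j + ereal (y j)"
proof -
  have "rmax n M i y \<in> (\<lambda>j. M i j + ereal (y j)) ` {..<n}"
    unfolding rmax_def using npos by (intro Max_in) auto
  thus ?thesis by auto
qed

lemma nbU_ne: "k < p \<Longrightarrow> nb (U k) \<noteq> {}"
  using rmax_in[of C k x] by (auto simp: nbU)

lemma amat_ge: "Ap i j \<le> amat Ap Am i j" "Am i j \<le> amat Ap Am i j"
  by (auto simp: amat_def)

lemma nbW': "j \<in> nb (W i) \<longleftrightarrow> (W i, V j) \<in> E \<or> (V j, W i) \<in> E"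
  by (simp add: nb_def)

lemma nbW: "nb (W i) = {j. i < m \<and> j < n \<and> rmax n (amat Ap Am) i x = amat Ap Am i j + ereal (x j)}"
proof (intro set_eqI iffI)
  fix j assume "j \<in> nb (W i)"
  then have ij: "i < m" "j < n" and
    h: "rmax n (amat Ap Am) i x = Am i j + ereal (x j) \<or> rmax n (amat Ap Am) i x = Ap i j + ereal (x j)"
    unfolding nbW' E_W1 E_W2 by auto
  have a: "amat Ap Am i j + ereal (x j) \<le> rmax n (amat Ap Am) i x" by (rule rmax_ge[OF ij(2)])
  have "Am i j + ereal (x j) \<le> amat Ap Am i j + ereal (x j)" "Ap i j + ereal (x j) \<le> amat Ap Am i j + ereal (x j)"
    using amat_ge by (auto intro: add_right_mono)
  then have "rmax n (amat Ap Am) i x = amat Ap Am i j + ereal (x j)"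
    using h a by (metis antisym)
  then show "j \<in> {j. i < m \<and> j < n \<and> rmax n (amat Ap Am) i x = amat Ap Am i j + ereal (x j)}"
    using ij by simp
next
  fix j assume "j \<in> {j. i < m \<and> j < n \<and> rmax n (amat Ap Am) i x = amat Ap Am i j + ereal (x j)}"
  then have ij: "i < m" "j < n" and h: "rmax n (amat Ap Am) i x = amat Ap Am i j + ereal (x j)" by auto
  have "amat Ap Am i j = Ap i j \<or> amat Ap Am i j = Am i j" by (auto simp: amat_def max_def)
  then show "j \<in> nb (W i)"
  proof
    assume "amat Ap Am i j = Ap i j" thus ?thesis using h ij unfolding nbW' E_W2 by simp
  next
    assume "amat Ap Am i j = Am i j" thus ?thesis using h ij unfolding nbW' E_W1 by simp
  qed
qed

lemma nbW_ne: "i < m \<Longrightarrow> nb (W i) \<noteq> {}"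
  using rmax_in[of "amat Ap Am" i x] by (auto simp: nbW)

lemma E_shape:
  assumes "e \<in> E"
  shows "\<exists>j. oth e = V j \<and> j \<in> nb (uw_end e) \<and> (case uw_end e of V _ \<Rightarrow> False | _ \<Rightarrow> True)"
  using assms
proof (cases rule: E_elim)
  case (EU k j) thus ?thesis using nbU' E_U by (auto simp: oth_def uw_end_def)
next
  case (EW1 i j) thus ?thesis using nbW' E_W1 by (auto simp: oth_def uw_end_def)
next
  case (EW2 i j) thus ?thesis using nbW' E_W2 by (auto simp: oth_def uw_end_def)
qed

lemma lam_nonneg: "e \<in> E \<Longrightarrow> 0 \<le> lam d e"
proof -
  assume "e \<in> E"
  then obtain j where j: "oth e = V j" "j \<in> nb (uw_end e)" "case uw_end e of V _ \<Rightarrow> False | _ \<Rightarrow> True"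
    using E_shape by blast
  have "d j \<le> phi d (uw_end e)" unfolding phi_def using j nb_fin by (intro Max_ge) auto
  moreover have "pot d (uw_end e) = phi d (uw_end e)" using j(3) by (auto simp: pot_def split: tvert.splits)
  ultimately show ?thesis using j by (simp add: lam_def pot_def)
qed


definition Fv :: "(nat \<Rightarrow> real) \<Rightarrow> tvert \<Rightarrow> real" where
  "Fv d v = (\<Sum>e\<in>E. lam d e * (if v \<in> side E e then 1 else 0))"

lemma G_const:
  assumes "a \<in> tverts m n p" "b \<in> tverts m n p"
  shows "Fv d a - pot d a = Fv d b - pot d b"
proof -
  have "\<forall>e\<in>E. (\<lambda>v. Fv d v - pot d v) (fst e) = (\<lambda>v. Fv d v - pot d v) (snd e)"
  proof
    fix e0 assume e0: "e0 \<in> E"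
    have "Fv d (uw_end e0) - Fv d (oth e0) = lam d e0"
      unfolding Fv_def by (rule F_edge[OF finE tree e0])
    hence "Fv d (uw_end e0) - pot d (uw_end e0) = Fv d (oth e0) - pot d (oth e0)"
      by (simp add: lam_def)
    thus "(\<lambda>v. Fv d v - pot d v) (fst e0) = (\<lambda>v. Fv d v - pot d v) (snd e0)"
      using uw_end_cases[of e0] by (auto simp: oth_def split: if_splits)
  qed
  moreover have "(a, b) \<in> uconn E" using tree assms by (auto simp: spanning_tree_def connected_on_def)
  ultimately show ?thesis by (rule const_on_uconn)
qed

lemma Max_const:
  fixes f :: "nat \<Rightarrow> real"
  assumes "finite A" "A \<noteq> {}" "\<forall>j\<in>A. f j = c"
  shows "Max (f ` A) = c"
proof -
  have "f ` A = {c}" using assms by auto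
  thus ?thesis by simp
qed

lemma U_term:
  assumes k: "k < p" and e: "e \<in> E"
  shows "lam d e * phi (ind (Tset e)) (U k) = lam d e * (if U k \<in> side E e then 1 else 0)"
proof (cases "fst e = U k")
  case False
  have "snd e \<noteq> U k" using e by (cases rule: E_elim) auto
  have "\<forall>j\<in>nb (U k). ind (Tset e) j = (if U k \<in> side E e then 1 else 0)"
  proof
    fix j assume j: "j \<in> nb (U k)"
    hence ed: "(U k, V j) \<in> E" "j < n" using nbU' nb_sub by auto
    have "(U k, V j) \<noteq> e" using False by auto
    from same_side[OF ed(1) this] have "U k \<in> side E e \<longleftrightarrow> V j \<in> side E e" by simp
    thus "ind (Tset e) j = (if U k \<in> side E e then 1 else 0)"
      using ed by (auto simp: ind_def Tset_eq)
  qed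
  hence "phi (ind (Tset e)) (U k) = (if U k \<in> side E e then 1 else 0)"
    unfolding phi_def using nb_fin nbU_ne[OF k] by (intro Max_const) auto
  thus ?thesis by simp
next
  case True
  from e True obtain j0 where e0: "e = (U k, V j0)" by (cases rule: E_elim) auto
  have uw: "uw_end e = U k" "oth e = V j0" using e0 by (auto simp: uw_end_def oth_def)
  have inside: "U k \<in> side E e" using uw_in_side[of e E] uw by simp
  show ?thesis
  proof (cases "\<exists>j1\<in>nb (U k). j1 \<noteq> j0")
    case True
    then obtain j1 where j1: "j1 \<in> nb (U k)" "j1 \<noteq> j0" by auto
    hence ed: "(U k, V j1) \<in> E" "j1 < n" using nbU' nb_sub by auto
    have "(U k, V j1) \<noteq> e" using e0 j1 by auto
    from same_side[OF ed(1) this] inside have "V j1 \<in> side E e" by simp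
    hence "j1 \<in> Tset e" using ed by (simp add: Tset_eq)
    hence "1 \<le> phi (ind (Tset e)) (U k)" unfolding phi_def using j1 nb_fin
      by (intro Max_ge_iff[THEN iffD2]) (auto simp: ind_def)
    moreover have "phi (ind (Tset e)) (U k) \<le> 1" unfolding phi_def using nb_fin nbU_ne[OF k]
      by (subst Max_le_iff) (auto simp: ind_def)
    ultimately show ?thesis using inside by simp
  next
    case False
    have "j0 \<in> nb (U k)" using nbU'[of j0 k] e e0 by simp
    hence "nb (U k) = {j0}" using False by blast
    hence "phi d (U k) = d j0" by (simp add: phi_def)
    hence "lam d e = 0" using uw by (simp add: lam_def pot_def)
    thus ?thesis by simp
  qed
qed

lemma identity: "gl d = (\<Sum>e\<in>E. lam d e * gl (ind (Tset e)))"
proof -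
  define c where "c = Fv d (V 0) - pot d (V 0)"
  have V0: "V 0 \<in> tverts m n p" using npos by (simp add: tverts_def)
  have FU: "Fv d (U k) = phi d (U k) + c" if "k < p" for k
    using G_const[OF _ V0, of "U k" d] that by (auto simp: c_def tverts_def pot_def)
  have FV: "Fv d (V j) = d j + c" if "j < n" for j
    using G_const[OF _ V0, of "V j" d] that by (auto simp: c_def tverts_def pot_def)
  have "(\<Sum>e\<in>E. lam d e * gl (ind (Tset e)))
     = (\<Sum>e\<in>E. (\<Sum>k<p. real (mup k) * (lam d e * phi (ind (Tset e)) (U k)))
              - (\<Sum>j<n. real (mum j) * (lam d e * ind (Tset e) j)))"
    unfolding gl_def by (simp add: right_diff_distrib sum_distrib_left algebra_simps)
  also have "\<dots> = (\<Sum>e\<in>E. (\<Sum>k<p. real (mup k) * (lam d e * (if U k \<in> side E e then 1 else 0)))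
              - (\<Sum>j<n. real (mum j) * (lam d e * (if V j \<in> side E e then 1 else 0))))"
  proof (rule sum.cong[OF refl])
    fix e assume e: "e \<in> E"
    have 1: "(\<Sum>k<p. real (mup k) * (lam d e * phi (ind (Tset e)) (U k)))
       = (\<Sum>k<p. real (mup k) * (lam d e * (if U k \<in> side E e then 1 else 0)))"
      by (rule sum.cong) (simp_all add: U_term[OF _ e])
    have 2: "(\<Sum>j<n. real (mum j) * (lam d e * ind (Tset e) j))
       = (\<Sum>j<n. real (mum j) * (lam d e * (if V j \<in> side E e then 1 else 0)))"
      by (rule sum.cong) (auto simp: ind_def Tset_eq)
    show "(\<Sum>k<p. real (mup k) * (lam d e * phi (ind (Tset e)) (U k))) -
         (\<Sum>j<n. real (mum j) * (lam d e * ind (Tset e) j)) =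
         (\<Sum>k<p. real (mup k) * (lam d e * (if U k \<in> side E e then 1 else 0))) -
         (\<Sum>j<n. real (mum j) * (lam d e * (if V j \<in> side E e then 1 else 0)))"
      using 1 2 by simp
  qed
  also have "\<dots> = (\<Sum>e\<in>E. \<Sum>k<p. real (mup k) * (lam d e * (if U k \<in> side E e then 1 else 0)))
              - (\<Sum>e\<in>E. \<Sum>j<n. real (mum j) * (lam d e * (if V j \<in> side E e then 1 else 0)))"
    by (rule sum_subtractf)
  also have "\<dots> = (\<Sum>k<p. \<Sum>e\<in>E. real (mup k) * (lam d e * (if U k \<in> side E e then 1 else 0)))
              - (\<Sum>j<n. \<Sum>e\<in>E. real (mum j) * (lam d e * (if V j \<in> side E e then 1 else 0)))"
    by (simp only: sum.swap[of _ E])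
  also have "\<dots> = (\<Sum>k<p. real (mup k) * Fv d (U k)) - (\<Sum>j<n. real (mum j) * Fv d (V j))"
    unfolding Fv_def by (simp only: sum_distrib_left)
  also have "\<dots> = (\<Sum>k<p. real (mup k) * (phi d (U k) + c)) - (\<Sum>j<n. real (mum j) * (d j + c))"
    using FU FV by simp
  also have "\<dots> = gl d + c * ((\<Sum>k<p. real (mup k)) - (\<Sum>j<n. real (mum j)))"
    unfolding gl_def by (simp add: algebra_simps sum.distrib sum_distrib_left sum_distrib_right)
  also have "(\<Sum>k<p. real (mup k)) = (\<Sum>j<n. real (mum j))"
    using balance by (metis of_nat_sum)
  finally show ?thesis by simp
qed


end


context ts begin

definition small :: "(nat \<Rightarrow> real) \<Rightarrow> bool" where
  "small d \<longleftrightarrow> (\<forall>g\<in>gaps m n p Ap Am C x. 0 < g \<longrightarrow> (\<forall>j<n. \<forall>j'<n. d j - d j' < g))"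

lemma ereal_fin_add: "r \<noteq> \<infinity> \<Longrightarrow> r \<noteq> -\<infinity> \<Longrightarrow> r + ereal y = ereal (real_of_ereal r + y)"
  by (cases r) auto

lemma gapC: "k < p \<Longrightarrow> j0 < n \<Longrightarrow> j < n \<Longrightarrow> C k j0 \<noteq> -\<infinity> \<Longrightarrow> C k j \<noteq> -\<infinity> \<Longrightarrow>
   \<bar>(real_of_ereal (C k j0) + x j0) - (real_of_ereal (C k j) + x j)\<bar> \<in> gaps m n p Ap Am C x"
  unfolding gaps_def
  apply (rule UnI2)
  apply (simp only: mem_Collect_eq)
  apply (rule exI[of _ k], rule exI[of _ j0], rule exI[of _ j])
  by simp

lemma gapA: "i < m \<Longrightarrow> j0 < n \<Longrightarrow> j < n \<Longrightarrow> amat Ap Am i j0 \<noteq> -\<infinity> \<Longrightarrow> amat Ap Am i j \<noteq> -\<infinity> \<Longrightarrow>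
   \<bar>(real_of_ereal (amat Ap Am i j0) + x j0) - (real_of_ereal (amat Ap Am i j) + x j)\<bar> \<in> gaps m n p Ap Am C x"
  unfolding gaps_def
  apply (rule UnI1)
  apply (simp only: mem_Collect_eq)
  apply (rule exI[of _ i], rule exI[of _ j0], rule exI[of _ j])
  by simp

lemma amat_noinf: "i < m \<Longrightarrow> j < n \<Longrightarrow> amat Ap Am i j \<noteq> \<infinity>"
  using noinfA by (auto simp: amat_def max_def)

lemma rmaxC_fin: "k < p \<Longrightarrow> rmax n C k x = ereal (real_of_ereal (rmax n C k x))"
proof -
  assume k: "k < p"
  obtain Mr where "Max ((\<lambda>j. C k j + ereal (x j)) ` {..<n}) = ereal Mr"
    using rmax_fin[OF npos, of "C k" x] noinfC rowC k by auto
  thus ?thesis by (simp add: rmax_def)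
qed

lemma rmaxA_fin: "i < m \<Longrightarrow> rmax n (amat Ap Am) i x = ereal (real_of_ereal (rmax n (amat Ap Am) i x))"
proof -
  assume i: "i < m"
  obtain Mr where "Max ((\<lambda>j. amat Ap Am i j + ereal (x j)) ` {..<n}) = ereal Mr"
    using rmax_fin[OF npos, of "amat Ap Am i" x] amat_noinf rowA i by auto
  thus ?thesis by (simp add: rmax_def)
qed

lemma rmaxC_shift:
  assumes k: "k < p" and sm: "small d"
  shows "rmax n C k (\<lambda>j. x j + d j) = ereal (real_of_ereal (rmax n C k x) + phi d (U k))"
proof -
  define Mr where "Mr = real_of_ereal (rmax n C k x)"
  have M: "Max ((\<lambda>j. C k j + ereal (x j)) ` {..<n}) = ereal Mr"
    using rmaxC_fin[OF k] by (simp add: Mr_def rmax_def)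
  have N: "{j. j < n \<and> C k j + ereal (x j) = ereal Mr} = nb (U k)"
    using k rmaxC_fin[OF k] by (auto simp: nbU Mr_def)
  have sc: "\<forall>j<n. \<forall>j0<n. C k j0 + ereal (x j0) = ereal Mr \<and> C k j \<noteq> -\<infinity> \<and> C k j + ereal (x j) \<noteq> ereal Mr
       \<longrightarrow> d j - d j0 < Mr - (real_of_ereal (C k j) + x j)"
  proof (intro allI impI)
    fix j j0 assume j: "j < n" "j0 < n" and h: "C k j0 + ereal (x j0) = ereal Mr \<and> C k j \<noteq> -\<infinity> \<and> C k j + ereal (x j) \<noteq> ereal Mr"
    have f0: "C k j0 \<noteq> -\<infinity>" "C k j0 \<noteq> \<infinity>" using h noinfC k j by auto
    have f1: "C k j \<noteq> -\<infinity>" "C k j \<noteq> \<infinity>" using h noinfC k j by auto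
    have e0: "real_of_ereal (C k j0) + x j0 = Mr" using h ereal_fin_add[OF f0(2,1)] by simp
    have "C k j + ereal (x j) \<le> ereal Mr" using M j by (metis lessThan_iff rmax_def rmax_ge)
    hence lt: "real_of_ereal (C k j) + x j < Mr" using h ereal_fin_add[OF f1(2,1)] by auto
    have "\<bar>(real_of_ereal (C k j0) + x j0) - (real_of_ereal (C k j) + x j)\<bar> \<in> gaps m n p Ap Am C x"
      using gapC[OF k j(2) j(1) f0(1) f1(1)] .
    moreover have "\<bar>(real_of_ereal (C k j0) + x j0) - (real_of_ereal (C k j) + x j)\<bar> = Mr - (real_of_ereal (C k j) + x j)"
      using e0 lt by simp
    ultimately show "d j - d j0 < Mr - (real_of_ereal (C k j) + x j)"
      using sm j lt unfolding small_def by auto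
  qed
  have "Max ((\<lambda>j. C k j + ereal (x j + d j)) ` {..<n}) = ereal (Mr + Max (d ` nb (U k)))"
    using row_shift[OF npos _ M sc] noinfC k N by auto
  thus ?thesis by (simp add: rmax_def Mr_def phi_def)
qed

lemma objf_shift:
  assumes sm: "small d"
  shows "objf n p C mup mum (\<lambda>j. x j + d j) = objf n p C mup mum x + gl d"
proof -
  have "(\<Sum>k<p. real (mup k) * real_of_ereal (rmax n C k (\<lambda>j. x j + d j)))
      = (\<Sum>k<p. real (mup k) * (real_of_ereal (rmax n C k x) + phi d (U k)))"
    by (rule sum.cong) (simp_all add: rmaxC_shift[OF _ sm])
  thus ?thesis unfolding objf_def gl_def
    by (simp add: algebra_simps sum.distrib)
qed


end


context ts begin

definition Kc :: "(nat \<Rightarrow> real) \<Rightarrow> bool" where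
  "Kc d \<longleftrightarrow> (\<forall>i<m. \<exists>js. (V js, W i) \<in> E \<and> (\<forall>j\<in>nb (W i). d j \<le> d js))"

lemma ereal_sol: "r + ereal y = ereal M \<Longrightarrow> r = ereal (M - y)"
  by (cases r) auto

lemma nbW_val:
  assumes i: "i < m" and j: "j \<in> nb (W i)"
  shows "j < n" "amat Ap Am i j = ereal (real_of_ereal (rmax n (amat Ap Am) i x) - x j)"
proof -
  have h: "i < m \<and> j < n \<and> rmax n (amat Ap Am) i x = amat Ap Am i j + ereal (x j)"
    using j by (simp add: nbW)
  thus "j < n" by simp
  have "amat Ap Am i j + ereal (x j) = ereal (real_of_ereal (rmax n (amat Ap Am) i x))"
    using h rmaxA_fin[OF i] by simp
  thus "amat Ap Am i j = ereal (real_of_ereal (rmax n (amat Ap Am) i x) - x j)" by (rule ereal_sol)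
qed

lemma amat_le_rmax:
  assumes i: "i < m" and j: "j < n" and b: "amat Ap Am i j = ereal b"
  shows "b + x j \<le> real_of_ereal (rmax n (amat Ap Am) i x)"
proof -
  have "amat Ap Am i j + ereal (x j) \<le> rmax n (amat Ap Am) i x" by (rule rmax_ge[OF j])
  hence "ereal (b + x j) \<le> ereal (real_of_ereal (rmax n (amat Ap Am) i x))"
    using b rmaxA_fin[OF i] by simp
  thus ?thesis by simp
qed

lemma amat_eq_nb:
  assumes i: "i < m" and j: "j < n" and b: "amat Ap Am i j = ereal b"
    and eq: "b + x j = real_of_ereal (rmax n (amat Ap Am) i x)"
  shows "j \<in> nb (W i)"
proof -
  have "rmax n (amat Ap Am) i x = amat Ap Am i j + ereal (x j)"
    using rmaxA_fin[OF i] b eq by simp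
  thus ?thesis using i j by (simp add: nbW)
qed

lemma gap_lt:
  assumes sm: "small d" and i: "i < m" and j: "j < n" and jm: "jm \<in> nb (W i)"
    and b: "amat Ap Am i j = ereal b" and lt: "b + x j < real_of_ereal (rmax n (amat Ap Am) i x)"
  shows "d j - d jm < real_of_ereal (rmax n (amat Ap Am) i x) - (b + x j)"
proof -
  define Mr where "Mr = real_of_ereal (rmax n (amat Ap Am) i x)"
  have jmn: "jm < n" and am: "amat Ap Am i jm = ereal (Mr - x jm)" using nbW_val[OF i jm] by (auto simp: Mr_def)
  have "\<bar>(real_of_ereal (amat Ap Am i jm) + x jm) - (real_of_ereal (amat Ap Am i j) + x j)\<bar> \<in> gaps m n p Ap Am C x"
    using gapA[OF i jmn j] am b by simp
  moreover have "\<bar>(real_of_ereal (amat Ap Am i jm) + x jm) - (real_of_ereal (amat Ap Am i j) + x j)\<bar> = Mr - (b + x j)"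
    using am b lt by (simp add: Mr_def)
  ultimately show ?thesis using sm j jmn lt unfolding small_def Mr_def by auto
qed

lemma Ap_fin_amat:
  assumes i: "i < m" and j: "j < n" and a: "Ap i j = ereal a"
  obtains b where "amat Ap Am i j = ereal b" "a \<le> b"
proof -
  have "amat Ap Am i j \<noteq> \<infinity>" using amat_noinf i j by simp
  moreover have "ereal a \<le> amat Ap Am i j" using amat_ge(1)[of i j] a by simp
  ultimately show ?thesis using that by (cases "amat Ap Am i j") auto
qed

lemma Am_fin_amat:
  assumes i: "i < m" and j: "j < n" and a: "Am i j = ereal a"
  obtains b where "amat Ap Am i j = ereal b" "a \<le> b"
proof -
  have "amat Ap Am i j \<noteq> \<infinity>" using amat_noinf i j by simp
  moreover have "ereal a \<le> amat Ap Am i j" using amat_ge(2)[of i j] a by simp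
  ultimately show ?thesis using that by (cases "amat Ap Am i j") auto
qed

lemma L3:
  assumes sm: "small d" and K: "Kc d"
  shows "feasS m n Ap Am (\<lambda>j. x j + d j)"
  unfolding feasS_def
proof (intro allI impI)
  fix i assume i: "i < m"
  define Mr where "Mr = real_of_ereal (rmax n (amat Ap Am) i x)"
  obtain js where js: "(V js, W i) \<in> E" "\<forall>j\<in>nb (W i). d j \<le> d js" using K i by (auto simp: Kc_def)
  have jsn: "js < n" and ap: "rmax n (amat Ap Am) i x = Ap i js + ereal (x js)" using js(1) by (auto simp: E_W2)
  have "Ap i js = ereal (Mr - x js)" using ap rmaxA_fin[OF i] by (intro ereal_sol) (simp add: Mr_def)
  hence "Ap i js + ereal (x js + d js) = ereal (Mr + d js)" by simp
  hence lo: "ereal (Mr + d js) \<le> rmax n Ap i (\<lambda>j. x j + d j)" using rmax_ge[OF jsn, of Ap i "\<lambda>j. x j + d j"] by simp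
  have jsnb: "js \<in> nb (W i)" using js(1) by (simp add: nbW')
  have "Am i j + ereal (x j + d j) \<le> ereal (Mr + d js)" if j: "j < n" for j
  proof (cases "Am i j")
    case (real a)
    obtain b where b: "amat Ap Am i j = ereal b" "a \<le> b" using Am_fin_amat[OF i j real] .
    have ble: "b + x j \<le> Mr" using amat_le_rmax[OF i j b(1)] by (simp add: Mr_def)
    show ?thesis
    proof (cases "b + x j = Mr")
      case True
      hence "j \<in> nb (W i)" using amat_eq_nb[OF i j b(1)] by (simp add: Mr_def)
      hence "d j \<le> d js" using js(2) by simp
      thus ?thesis using real b True by simp
    next
      case False
      hence "b + x j < Mr" using ble by simp
      hence "d j - d js < Mr - (b + x j)" using gap_lt[OF sm i j jsnb b(1)] by (simp add: Mr_def)
      thus ?thesis using real b by simp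
    qed
  next
    case PInf
    then show ?thesis using noinfA i j by auto
  next
    case MInf
    then show ?thesis by simp
  qed
  hence hi: "rmax n Am i (\<lambda>j. x j + d j) \<le> ereal (Mr + d js)"
    unfolding rmax_def using npos by (subst Max_le_iff) auto
  show "rmax n Ap i (\<lambda>j. x j + d j) \<ge> rmax n Am i (\<lambda>j. x j + d j)" using lo hi by simp
qed

lemma L2:
  assumes sm: "small d" and fy: "feasS m n Ap Am (\<lambda>j. x j + d j)"
  shows "Kc d"
  unfolding Kc_def
proof (intro allI impI)
  fix i assume i: "i < m"
  show "\<exists>js. (V js, W i) \<in> E \<and> (\<forall>j\<in>nb (W i). d j \<le> d js)"
  proof (rule ccontr)
    assume nK: "\<not> ?thesis"
    define Mr where "Mr = real_of_ereal (rmax n (amat Ap Am) i x)"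
    have fnb: "finite (nb (W i))" "nb (W i) \<noteq> {}" using nb_fin nbW_ne[OF i] by auto
    have "Max (d ` nb (W i)) \<in> d ` nb (W i)" using fnb by (intro Max_in) auto
    then obtain jm where jm: "jm \<in> nb (W i)" "d jm = Max (d ` nb (W i))" by auto
    have mx: "d j \<le> d jm" if "j \<in> nb (W i)" for j using jm fnb that by (simp add: Max_ge)
    have strict: "d j < d jm" if "(V j, W i) \<in> E" for j
    proof -
      from nK that obtain j' where "j' \<in> nb (W i)" "\<not> d j' \<le> d j" by blast
      thus ?thesis using mx[of j'] by simp
    qed
    have notp: "(V jm, W i) \<notin> E" using strict by blast
    hence "(W i, V jm) \<in> E" using jm(1) by (simp add: nbW')
    hence jmn: "jm < n" and am: "rmax n (amat Ap Am) i x = Am i jm + ereal (x jm)" by (auto simp: E_W1)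
    have "Am i jm = ereal (Mr - x jm)" using am rmaxA_fin[OF i] by (intro ereal_sol) (simp add: Mr_def)
    hence "Am i jm + ereal (x jm + d jm) = ereal (Mr + d jm)" by simp
    hence A1: "ereal (Mr + d jm) \<le> rmax n Am i (\<lambda>j. x j + d j)"
      using rmax_ge[OF jmn, of Am i "\<lambda>j. x j + d j"] by simp
    have "Ap i j + ereal (x j + d j) < ereal (Mr + d jm)" if j: "j < n" for j
    proof (cases "Ap i j")
      case (real a)
      obtain b where b: "amat Ap Am i j = ereal b" "a \<le> b" using Ap_fin_amat[OF i j real] .
      have ble: "b + x j \<le> Mr" using amat_le_rmax[OF i j b(1)] by (simp add: Mr_def)
      show ?thesis
      proof (cases "b + x j = Mr")
        case True
        hence jnb: "j \<in> nb (W i)" using amat_eq_nb[OF i j b(1)] by (simp add: Mr_def)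
        show ?thesis
        proof (cases "(V j, W i) \<in> E")
          case True
          hence "d j < d jm" by (rule strict)
          moreover have "a + x j \<le> Mr" using b ble by simp
          ultimately show ?thesis using real by simp
        next
          case False
          have "a + x j \<noteq> Mr"
          proof
            assume "a + x j = Mr"
            hence "rmax n (amat Ap Am) i x = Ap i j + ereal (x j)" using real rmaxA_fin[OF i] by (simp add: Mr_def)
            hence "(V j, W i) \<in> E" using i j by (simp add: E_W2)
            thus False using False by simp
          qed
          hence "a + x j < Mr" using b ble by simp
          moreover have "d j \<le> d jm" using mx[OF jnb] .
          ultimately show ?thesis using real by simp
        qed
      next
        case False
        hence "b + x j < Mr" using ble by simp
        hence "d j - d jm < Mr - (b + x j)" using gap_lt[OF sm i j jm(1) b(1)] by (simp add: Mr_def)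
        thus ?thesis using real b by simp
      qed
    next
      case PInf
      then show ?thesis using noinfA i j by auto
    next
      case MInf
      then show ?thesis by simp
    qed
    hence A2: "rmax n Ap i (\<lambda>j. x j + d j) < ereal (Mr + d jm)"
      unfolding rmax_def using npos by (subst Max_less_iff) auto
    have "rmax n Ap i (\<lambda>j. x j + d j) \<ge> rmax n Am i (\<lambda>j. x j + d j)" using fy i by (simp add: feasS_def)
    thus False using A1 A2 by simp
  qed
qed


lemma Nplus_ne:
  assumes i: "i < m"
  shows "\<exists>j. (V j, W i) \<in> E"
proof -
  obtain j0 where j0: "j0 < n" "rmax n Ap i x = Ap i j0 + ereal (x j0)" using rmax_in[of Ap i x] by auto
  have fe: "rmax n Am i x \<le> rmax n Ap i x" using feas i by (simp add: feasS_def)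
  have "amat Ap Am i j + ereal (x j) \<le> Ap i j0 + ereal (x j0)" if j: "j < n" for j
  proof (cases "Ap i j \<le> Am i j")
    case True
    hence "amat Ap Am i j = Am i j" by (simp add: amat_def max_def)
    thus ?thesis using rmax_ge[OF j, of Am i x] fe j0(2) by simp
  next
    case False
    hence "amat Ap Am i j = Ap i j" by (simp add: amat_def max_def)
    thus ?thesis using rmax_ge[OF j, of Ap i x] j0(2) by simp
  qed
  hence le: "rmax n (amat Ap Am) i x \<le> Ap i j0 + ereal (x j0)"
    unfolding rmax_def using npos j0 by (subst Max_le_iff) auto
  have "Ap i j0 + ereal (x j0) \<le> amat Ap Am i j0 + ereal (x j0)"
    using amat_ge(1) by (rule add_right_mono)
  also have "\<dots> \<le> rmax n (amat Ap Am) i x" by (rule rmax_ge[OF j0(1)])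
  finally have "rmax n (amat Ap Am) i x = Ap i j0 + ereal (x j0)" using le by simp
  thus ?thesis using i j0 by (auto simp: E_W2)
qed

lemma E3_iff: "(V j, W i) \<in> E3 m n Ap Am x \<longleftrightarrow> (V j, W i) \<in> E"
  by (simp add: tedges_def E1_def E2_def E3_def)

lemma Ecirc_E: "e \<in> Ecirc m n p Ap Am C x \<Longrightarrow> e \<in> E"
  by (auto simp: Ecirc_def tedges_def)

lemma Ecirc_card:
  assumes "(V j0, W i) \<in> Ecirc m n p Ap Am C x"
  shows "2 \<le> card {j. (V j, W i) \<in> E}"
proof -
  have "(V j0, W i) \<notin> E1 n p C x" "(V j0, W i) \<notin> E2 m n Ap Am x" by (auto simp: E1_def E2_def)
  hence "2 \<le> card {j. (V j, W i) \<in> E3 m n Ap Am x}" using assms by (auto simp: Ecirc_def)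
  thus ?thesis by (simp add: E3_iff)
qed

lemma card2_other:
  assumes "2 \<le> card S"
  obtains j where "j \<in> S" "j \<noteq> j0"
proof -
  have "\<not> S \<subseteq> {j0}"
  proof
    assume "S \<subseteq> {j0}"
    hence "card S \<le> card {j0}" by (intro card_mono) auto
    thus False using assms by simp
  qed
  thus ?thesis using that by blast
qed

lemma ind_le1: "ind T j \<le> 1" "0 \<le> ind T j"
  by (auto simp: ind_def)

lemma Kc_ind:
  assumes ec: "e \<in> Ecirc m n p Ap Am C x"
  shows "Kc (ind (Tset e))"
  unfolding Kc_def
proof (intro allI impI)
  fix i assume i: "i < m"
  have e: "e \<in> E" using ec by (rule Ecirc_E)
  obtain j1 where j1: "(V j1, W i) \<in> E" using Nplus_ne[OF i] by auto
  have good: "\<exists>js. (V js, W i) \<in> E \<and> (\<forall>j\<in>nb (W i). ind (Tset e) j \<le> ind (Tset e) js)"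
    if "(V js, W i) \<in> E" "V js \<in> side E e" for js
  proof -
    have "js < n" using that(1) by (simp add: E_W2)
    hence "ind (Tset e) js = 1" using that(2) by (simp add: ind_def Tset_eq)
    thus ?thesis using that(1) ind_le1 by metis
  qed
  show "\<exists>js. (V js, W i) \<in> E \<and> (\<forall>j\<in>nb (W i). ind (Tset e) j \<le> ind (Tset e) js)"
  proof (cases "fst e = W i")
    case True
    from e True obtain j0 where e0: "e = (W i, V j0)" by (cases rule: E_elim) auto
    have "uw_end e = W i" using e0 by (simp add: uw_end_def)
    hence ins: "W i \<in> side E e" using uw_in_side[of e E] by simp
    have "(V j1, W i) \<noteq> e" using e0 by simp
    from same_side[OF j1 this] ins have "V j1 \<in> side E e" by simp
    thus ?thesis using good j1 by blast
  next
    case False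
    show ?thesis
    proof (cases "snd e = W i")
      case True
      from e True obtain j0 where e0: "e = (V j0, W i)" by (cases rule: E_elim) auto
      have "uw_end e = W i" using e0 by (simp add: uw_end_def)
      hence ins: "W i \<in> side E e" using uw_in_side[of e E] by simp
      have "2 \<le> card {j. (V j, W i) \<in> E}" using ec e0 Ecirc_card by simp
      then obtain j2 where j2: "(V j2, W i) \<in> E" "j2 \<noteq> j0" by (rule card2_other) auto
      have "(V j2, W i) \<noteq> e" using e0 j2 by simp
      from same_side[OF j2(1) this] ins have "V j2 \<in> side E e" by simp
      thus ?thesis using good j2 by blast
    next
      case False2: False
      show ?thesis
      proof (cases "W i \<in> side E e")
        case True
        have "(V j1, W i) \<noteq> e" using False2 by auto
        from same_side[OF j1 this] True have "V j1 \<in> side E e" by simp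
        thus ?thesis using good j1 by blast
      next
        case out: False
        have "ind (Tset e) j = 0" if j: "j \<in> nb (W i)" for j
        proof -
          have "(W i, V j) \<in> E \<or> (V j, W i) \<in> E" using j by (simp add: nbW')
          hence "V j \<notin> side E e"
          proof
            assume ed: "(W i, V j) \<in> E"
            have "(W i, V j) \<noteq> e" using False by auto
            from same_side[OF ed this] out show ?thesis by simp
          next
            assume ed: "(V j, W i) \<in> E"
            have "(V j, W i) \<noteq> e" using False2 by auto
            from same_side[OF ed this] out show ?thesis by simp
          qed
          thus ?thesis by (simp add: ind_def Tset_eq)
        qed
        thus ?thesis using j1 ind_le1 by (metis order.refl)
      qed
    qed
  qed
qed

lemma Kc_scale: "Kc f \<Longrightarrow> 0 \<le> (c::real) \<Longrightarrow> Kc (\<lambda>j. c * f j)"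
  unfolding Kc_def by (meson mult_left_mono)

lemma phi_scale:
  assumes "nb z \<noteq> {}" "0 \<le> (c::real)"
  shows "phi (\<lambda>j. c * f j) z = c * phi f z"
proof -
  have mo: "mono (\<lambda>y::real. c * y)" by (rule monoI) (simp add: mult_left_mono assms(2))
  have "(\<lambda>j. c * f j) ` nb z = (\<lambda>y. c * y) ` (f ` nb z)" by (simp add: image_image)
  thus ?thesis unfolding phi_def using mono_Max_commute[OF mo, of "f ` nb z"] nb_fin assms(1) by simp
qed

lemma gl_scale:
  assumes "0 \<le> (c::real)"
  shows "gl (\<lambda>j. c * f j) = c * gl f"
proof -
  have "(\<Sum>k<p. real (mup k) * phi (\<lambda>j. c * f j) (U k)) = (\<Sum>k<p. c * (real (mup k) * phi f (U k)))"
    by (rule sum.cong) (auto simp: phi_scale[OF nbU_ne assms])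
  thus ?thesis unfolding gl_def by (simp add: sum_distrib_left right_diff_distrib algebra_simps)
qed

lemma in_Ecirc:
  assumes e: "e \<in> E" and lp: "0 < lam d e" and K: "Kc d"
  shows "e \<in> Ecirc m n p Ap Am C x"
  using e
proof (cases rule: E_elim)
  case (EU k j)
  then show ?thesis by (auto simp: Ecirc_def E1_def)
next
  case (EW1 i j)
  then show ?thesis by (auto simp: Ecirc_def E2_def)
next
  case (EW2 i j)
  have uw: "uw_end e = W i" "oth e = V j" using EW2 by (auto simp: uw_end_def oth_def)
  hence lt: "d j < phi d (W i)" using lp by (simp add: lam_def pot_def)
  obtain js where js: "(V js, W i) \<in> E" "\<forall>j\<in>nb (W i). d j \<le> d js" using K EW2 by (auto simp: Kc_def)
  have "phi d (W i) \<in> d ` nb (W i)" unfolding phi_def using nb_fin nbW_ne[OF EW2(2)] by (intro Max_in) auto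
  hence "phi d (W i) \<le> d js" using js(2) by auto
  hence ne: "js \<noteq> j" using lt by auto
  have ed: "(V j, W i) \<in> E" using EW2 e by simp
  have sub: "{j, js} \<subseteq> {j'. (V j', W i) \<in> E3 m n Ap Am x}" using ed js(1) by (simp add: E3_iff)
  have fin: "finite {j'. (V j', W i) \<in> E3 m n Ap Am x}"
    by (rule finite_subset[of _ "{..<n}"]) (auto simp: E3_def)
  have "card {j, js} \<le> card {j'. (V j', W i) \<in> E3 m n Ap Am x}" using card_mono[OF fin sub] .
  hence "2 \<le> card {j'. (V j', W i) \<in> E3 m n Ap Am x}" using ne by simp
  moreover have "e \<in> E3 m n Ap Am x" using ed EW2 by (simp add: E3_iff)
  ultimately show ?thesis using EW2 by (auto simp: Ecirc_def)
qed

end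


lemma gaps_fin: "finite (gaps m n p Ap Am C x)"
proof -
  let ?A = "{\<bar>(real_of_ereal (amat Ap Am i j1) + x j1) - (real_of_ereal (amat Ap Am i j2) + x j2)\<bar> | i j1 j2.
        i < m \<and> j1 < n \<and> j2 < n \<and> amat Ap Am i j1 \<noteq> -\<infinity> \<and> amat Ap Am i j2 \<noteq> -\<infinity>}"
  let ?B = "{\<bar>(real_of_ereal (C k j1) + x j1) - (real_of_ereal (C k j2) + x j2)\<bar> | k j1 j2.
        k < p \<and> j1 < n \<and> j2 < n \<and> C k j1 \<noteq> -\<infinity> \<and> C k j2 \<noteq> -\<infinity>}"
  have A: "?A \<subseteq> (\<lambda>(i, j1, j2). \<bar>(real_of_ereal (amat Ap Am i j1) + x j1) - (real_of_ereal (amat Ap Am i j2) + x j2)\<bar>)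
           ` ({..<m} \<times> {..<n} \<times> {..<n})"
  proof
    fix u assume "u \<in> ?A"
    then obtain i j1 j2 where u: "u = \<bar>(real_of_ereal (amat Ap Am i j1) + x j1) - (real_of_ereal (amat Ap Am i j2) + x j2)\<bar>"
      "i < m" "j1 < n" "j2 < n" by blast
    show "u \<in> (\<lambda>(i, j1, j2). \<bar>(real_of_ereal (amat Ap Am i j1) + x j1) - (real_of_ereal (amat Ap Am i j2) + x j2)\<bar>)
           ` ({..<m} \<times> {..<n} \<times> {..<n})"
      by (rule image_eqI[where x="(i, j1, j2)"]) (use u in auto)
  qed
  have B: "?B \<subseteq> (\<lambda>(k, j1, j2). \<bar>(real_of_ereal (C k j1) + x j1) - (real_of_ereal (C k j2) + x j2)\<bar>)
           ` ({..<p} \<times> {..<n} \<times> {..<n})"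
  proof
    fix u assume "u \<in> ?B"
    then obtain k j1 j2 where u: "u = \<bar>(real_of_ereal (C k j1) + x j1) - (real_of_ereal (C k j2) + x j2)\<bar>"
      "k < p" "j1 < n" "j2 < n" by blast
    show "u \<in> (\<lambda>(k, j1, j2). \<bar>(real_of_ereal (C k j1) + x j1) - (real_of_ereal (C k j2) + x j2)\<bar>)
           ` ({..<p} \<times> {..<n} \<times> {..<n})"
      by (rule image_eqI[where x="(k, j1, j2)"]) (use u in auto)
  qed
  have "finite ?A" by (rule finite_subset[OF A]) auto
  moreover have "finite ?B" by (rule finite_subset[OF B]) auto
  ultimately show ?thesis unfolding gaps_def by simp
qed

theorem theorem5p3:
  fixes m n p :: nat
    and Ap Am C :: "nat \<Rightarrow> nat \<Rightarrow> ereal"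
    and mup mum :: "nat \<Rightarrow> nat"
    and x :: "nat \<Rightarrow> real"
  assumes noinf: "\<forall>i<m. \<forall>j<n. Ap i j \<noteq> \<infinity> \<and> Am i j \<noteq> \<infinity>" "\<forall>k<p. \<forall>j<n. C k j \<noteq> \<infinity>"
    and rowA: "\<forall>i<m. \<exists>j<n. amat Ap Am i j \<noteq> -\<infinity>"
    and rowC: "\<forall>k<p. \<exists>j<n. C k j \<noteq> -\<infinity>"
    and balance: "(\<Sum>k<p. mup k) = (\<Sum>j<n. mum j)"
    and conn: "connected_on (tverts m n p) (supp_edges m n p Ap Am C)"
    and nondeg: "nondegenerate m n p Ap Am C"
    and feas: "feasS m n Ap Am x"
    and tree: "spanning_tree (tverts m n p) (tedges m n p Ap Am C x)"
    and notopt: "\<not> local_opt m n p Ap Am C mup mum x"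
  shows "\<exists>e\<in>Ecirc m n p Ap Am C x.
           descent_dir m n p Ap Am C mup mum (subtreeV n (tedges m n p Ap Am C x) e) x"
proof -
  have n0: "0 < n"
  proof (rule ccontr)
    assume "\<not> 0 < n"
    hence n: "n = 0" by simp
    hence p: "p = 0" using rowC by (metis less_nat_zero_code neq0_conv)
    have "local_opt m n p Ap Am C mup mum x" unfolding local_opt_def
      using feas n p by (auto simp: objf_def intro: exI[of _ 1])
    thus False using notopt by simp
  qed
  interpret ts m n p Ap Am C mup mum x
    using noinf rowA rowC balance feas tree n0 by unfold_locales auto
  define P where "P = {g \<in> gaps m n p Ap Am C x. 0 < g}"
  have finP: "finite P" using gaps_fin[of m n p Ap Am C x] by (simp add: P_def)
  define d0 where "d0 = (if P = {} then 1 else Min P / 2)"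
  have d0pos: "0 < d0"
  proof (cases "P = {}")
    case False
    hence "Min P \<in> P" using finP by (intro Min_in) auto
    thus ?thesis using False by (simp add: d0_def P_def)
  qed (simp add: d0_def)
  have d0le: "2 * d0 \<le> g" if "g \<in> P" for g
  proof -
    have "P \<noteq> {}" using that by auto
    moreover have "Min P \<le> g" using finP that by (intro Min_le)
    ultimately show ?thesis by (simp add: d0_def)
  qed
  have "\<not> (\<forall>y. feasS m n Ap Am y \<and> (\<forall>j<n. \<bar>x j - y j\<bar> < d0)
        \<longrightarrow> objf n p C mup mum y \<ge> objf n p C mup mum x)"
    using notopt feas d0pos unfolding local_opt_def by blast
  then obtain y where y: "feasS m n Ap Am y" "\<forall>j<n. \<bar>x j - y j\<bar> < d0"
    "objf n p C mup mum y < objf n p C mup mum x" by (auto simp: not_le)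
  define d where "d = (\<lambda>j. y j - x j)"
  have yd: "(\<lambda>j. x j + d j) = y" by (auto simp: d_def)
  have sm: "small d" unfolding small_def
  proof (intro ballI impI allI)
    fix g j j' assume g: "g \<in> gaps m n p Ap Am C x" "0 < g" and j: "j < n" "j' < n"
    have "2 * d0 \<le> g" using g by (intro d0le) (simp add: P_def)
    moreover have "\<bar>x j - y j\<bar> < d0" "\<bar>x j' - y j'\<bar> < d0" using y(2) j by auto
    ultimately show "d j - d j' < g" by (simp add: d_def abs_less_iff)
  qed
  have gneg: "gl d < 0" using objf_shift[OF sm] yd y(3) by simp
  have K: "Kc d" using L2[OF sm] yd y(1) by simp
  have "(\<Sum>e\<in>E. lam d e * gl (ind (Tset e))) < 0" using identity[of d] gneg by simp
  then obtain e where e: "e \<in> E" and neg: "lam d e * gl (ind (Tset e)) < 0"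
    by (meson not_le sum_nonneg)
  have lam0: "0 \<le> lam d e" using lam_nonneg[OF e] .
  have glneg: "gl (ind (Tset e)) < 0" using lam0 neg by (metis mult_nonneg_nonneg not_le)
  have lpos: "0 < lam d e" using lam0 neg by (cases "lam d e = 0") auto
  have ec: "e \<in> Ecirc m n p Ap Am C x" using in_Ecirc[OF e lpos K] .
  show ?thesis
  proof (rule bexI[OF _ ec])
    show "descent_dir m n p Ap Am C mup mum (subtreeV n E e) x"
      unfolding descent_dir_def
    proof (intro conjI allI impI)
      show "subtreeV n E e \<subseteq> {..<n}" by (auto simp: subtreeV_def)
    next
      fix \<delta> assume dl: "0 < \<delta> \<and> (\<forall>g\<in>gaps m n p Ap Am C x. 0 < g \<longrightarrow> \<delta> < g)"
      define f where "f = (\<lambda>j. \<delta> * ind (Tset e) j)"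
      have sh: "shiftv x \<delta> (subtreeV n E e) = (\<lambda>j. x j + f j)"
        by (auto simp: shiftv_def f_def ind_def Tset_def)
      have smf: "small f" unfolding small_def
      proof (intro ballI impI allI)
        fix g j j' assume g: "g \<in> gaps m n p Ap Am C x" "0 < g"
        have "f j \<le> \<delta>" "0 \<le> f j'" using dl by (auto simp: f_def ind_def)
        moreover have "\<delta> < g" using dl g by auto
        ultimately show "f j - f j' < g" by simp
      qed
      have Kf: "Kc f" unfolding f_def using Kc_scale[OF Kc_ind[OF ec]] dl by simp
      show "feasS m n Ap Am (shiftv x \<delta> (subtreeV n E e))" using L3[OF smf Kf] sh by simp
      have "gl f = \<delta> * gl (ind (Tset e))" unfolding f_def using gl_scale dl by simp
      moreover have "\<delta> * gl (ind (Tset e)) < 0" using dl glneg by (simp add: mult_pos_neg)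
      ultimately show "objf n p C mup mum (shiftv x \<delta> (subtreeV n E e)) < objf n p C mup mum x"
        using objf_shift[OF smf] sh by simp
    qed
  qed
qed


end
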